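(* In the two-tier residency matching game described in the context with list length $K=1$ and $v\ge e/(e-1)$, under the large market approximation, the social welfare of the (symmetric) Nash equilibrium is at least a $\frac{e}{2(e-1)}$ fraction (note $\frac{e}{2(e-1)}>0.79$) of the social welfare of SIMPLE.
   Context: Model: there are $n$ high-tier and $rn$ low-tier doctors ($r>0$), and $n$ high-tier and $rn$ low-tier hospitals, each with one position. Every hospital prefers every high doctor to every low doctor and every doctor prefers every high hospital to every low hospital; within a tier, preferences are independent uniformly random permutations. Each doctor submits a ranked list of exactly $K$ hospitals (his top choices within the tiers he chooses); hospitals submit full true rankings; doctor-proposing deferred acceptance is run. Values: a doctor gets $v>1$ if matched to a high hospital, $1$ if matched to a low one, $0$ if unmatched; a hospital gets $v$ if matched to a high doctor, $1$ if matched to a low doctor, $0$ if unfilled. Social welfare is the sum of the values of all doctors and hospitals. Large market approximation: $n\to\infty$ with $r,K,v$ fixed, and each application to a hospital is accepted independently with a probability determined by the aggregate strategy profile through fixed-point equations (expected matched doctors = expected hospitals receiving at least one admissible application; a hospital receiving on average $\lambda$ applications gets none with probability $e^{-\lambda}$; low doctors' applications to hospitals already taken by high doctors are rejected). Equilibrium: symmetric Nash equilibrium, all doctors of a tier using the same (possibly mixed) strategy, each maximizing expected value given the acceptance probabilities. SIMPLE: the outcome when every doctor submits a single application ($K=1$) to his most preferred hospital in his own tier; its welfare in the large market limit is $2(v+r)n(1-1/e)$. *)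

theory Defs
  imports Complex_Main
begin

(* Large-market model with list length K = 1.
   A (mixed) symmetric strategy profile is (p, q):
     p = probability a high doctor applies to his top high hospital (else his top low hospital),
     q = probability a low doctor applies to his top high hospital (else his top low hospital).
   There are n high and r*n low hospitals; all counts below are per n (large-market limit). *)

(* acceptance probability of an application to a hospital tier receiving on average
   lambda applications per hospital (all admissible): (1 - e^-x)/lambda,
   with the limiting value 1 when lambda = 0 *)
definition acc :: "real \<Rightarrow> real" where
  "acc x = (if x = 0 then 1 else (1 - exp (- x)) / x)"

(* acceptance probabilities: doctor tier / hospital tier *)
definition acc_HH :: "real \<Rightarrow> real \<Rightarrow> real \<Rightarrow> real" where
  "acc_HH r p q = acc p"
definition acc_HL :: "real \<Rightarrow> real \<Rightarrow> real \<Rightarrow> real" where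
  "acc_HL r p q = acc ((1 - p) / r)"
definition acc_LH :: "real \<Rightarrow> real \<Rightarrow> real \<Rightarrow> real" where
  "acc_LH r p q = exp (- p) * acc (q * r)"
definition acc_LL :: "real \<Rightarrow> real \<Rightarrow> real \<Rightarrow> real" where
  "acc_LL r p q = exp (- ((1 - p) / r)) * acc (1 - q)"

definition symNE :: "real \<Rightarrow> real \<Rightarrow> real \<Rightarrow> real \<Rightarrow> bool" where
  "symNE r v p q \<longleftrightarrow>
     0 \<le> p \<and> p \<le> 1 \<and> 0 \<le> q \<and> q \<le> 1 \<and>
     (p > 0 \<longrightarrow> v * acc_HH r p q \<ge> acc_HL r p q) \<and>
     (p < 1 \<longrightarrow> acc_HL r p q \<ge> v * acc_HH r p q) \<and>
     (q > 0 \<longrightarrow> v * acc_LH r p q \<ge> acc_LL r p q) \<and>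
     (q < 1 \<longrightarrow> acc_LL r p q \<ge> v * acc_LH r p q)"

(* social welfare divided by n in the large-market limit:
   high-high matches (value 2v), high doctor-low hospital (v+1),
   low doctor-high hospital (1+v), low-low (2) *)
definition welfare :: "real \<Rightarrow> real \<Rightarrow> real \<Rightarrow> real \<Rightarrow> real" where
  "welfare r v p q =
      2 * v * (1 - exp (- p))
    + (v + 1) * r * (1 - exp (- ((1 - p) / r)))
    + (1 + v) * exp (- p) * (1 - exp (- (q * r)))
    + 2 * r * exp (- ((1 - p) / r)) * (1 - exp (- (1 - q)))"

(* SIMPLE: every doctor applies once to his top hospital in his own tier *)
definition welfare_simple :: "real \<Rightarrow> real \<Rightarrow> real" where
  "welfare_simple r v = welfare r v 1 0"

lemma welfare_simple_formula:
  assumes "r > 0" shows "welfare_simple r v = 2 * (v + r) * (1 - exp (-1))"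
  using assms by (simp add: welfare_simple_def welfare_def algebra_simps)

end

theory Submission
  imports Defs
begin

lemma exp_strict: fixes t :: real assumes "t \<noteq> 0" shows "1 + t < exp t"
proof (cases "t \<le> -2")
  case True then show ?thesis by (smt (verit) exp_gt_zero)
next
  case False
  have h: "1 + t/2 \<le> exp (t/2)" by simp
  have h0: "0 \<le> 1 + t/2" using False by simp
  have "(1 + t/2)^2 \<le> (exp (t/2))^2" using h h0 by (rule power_mono)
  also have "(exp (t/2))^2 = exp t" by (simp add: power2_eq_square flip: exp_add)
  finally have "(1+t/2)^2 \<le> exp t" .
  moreover have "1 + t < (1+t/2)^2" proof -
    have "t * t > 0" using assms by (cases "t>0") (auto simp: mult_neg_neg)
    then show ?thesis by (simp add: power2_eq_square algebra_simps)
  qed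
  ultimately show ?thesis by simp
qed

lemma chord: fixes p :: real assumes "0 < p" "p < 1"
  shows "exp (-p) < (1 - p) + p * exp (-1)"
proof -
  have a: "exp (-p) * (1 + p) < 1"
  proof -
    have "1 + p < exp p" using exp_strict[of p] assms by simp
    then have "exp (-p) * (1+p) < exp (-p) * exp p" by simp
    then show ?thesis by (simp flip: exp_add)
  qed
  have b: "exp (-p) * p < exp (-1)"
  proof -
    have "1 + (p - 1) < exp (p - 1)" using exp_strict[of "p-1"] assms by simp
    then have "exp (-p) * p < exp (-p) * exp (p-1)" by simp
    then show ?thesis by (simp flip: exp_add)
  qed
  have "exp (-p) = (1-p) * (exp (-p) * (1+p)) + p * (exp (-p) * p)"
    by (simp add: algebra_simps power2_eq_square)
  also have "\<dots> < (1-p) * 1 + p * exp (-1)"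
    using a b assms by (intro add_strict_mono mult_strict_left_mono) auto
  finally show ?thesis by simp
qed

lemma acc_le1: fixes z :: real assumes "0 \<le> z" shows "acc z \<le> 1"
proof (cases "z = 0")
  case True then show ?thesis by (simp add: acc_def)
next
  case False
  have "1 - z \<le> exp (-z)" using exp_ge_add_one_self[of "-z"] by simp
  then have "1 - exp (-z) \<le> z" by simp
  then show ?thesis using False assms by (simp add: acc_def divide_le_eq)
qed

lemma p_is_1:
  assumes r: "r > 0" and v: "v \<ge> exp 1 / (exp 1 - 1)" and ne: "symNE r v p q"
  shows "p = 1"
proof (rule ccontr)
  assume "p \<noteq> 1"
  with ne have p1: "p < 1" and p0: "0 \<le> p" by (auto simp: symNE_def)
  with ne have le: "v * acc p \<le> acc ((1 - p) / r)" by (auto simp: symNE_def acc_HH_def acc_HL_def)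
  have "acc ((1-p)/r) \<le> 1" using p1 r by (intro acc_le1) simp
  with le have le1: "v * acc p \<le> 1" by simp
  have e1: "exp (1::real) > 1" by simp
  have v1: "v > 1"
  proof -
    have "exp 1 / (exp 1 - 1) > (1::real)" using e1 by (simp add: less_divide_eq)
    with v show ?thesis by linarith
  qed
  have ee: "exp (-1::real) = 1 / exp 1" by (simp add: exp_minus field_simps)
  show False
  proof (cases "p = 0")
    case True then show ?thesis using le1 v1 by (simp add: acc_def)
  next
    case False
    with p0 have pp: "0 < p" by simp
    have c: "exp (-p) < (1 - p) + p * exp (-1)" using chord pp p1 by simp
    have accp: "acc p = (1 - exp (-p)) / p" using False by (simp add: acc_def)
    have "p * (1 - exp (-1)) < 1 - exp (-p)" using c by (simp add: algebra_simps)
    then have a1: "1 - exp (-1) < acc p" using pp accp by (simp add: less_divide_eq mult.commute)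
    have "v * (1 - exp (-1)) \<ge> 1"
    proof -
      have pos: "exp 1 - 1 > (0::real)" using e1 by simp
      have "1 - exp (-1) = (exp 1 - 1) / exp (1::real)" using ee by (simp add: field_simps)
      moreover have "v * ((exp 1 - 1) / exp 1) \<ge> (exp 1 / (exp 1 - 1)) * ((exp 1 - 1) / exp 1)"
        using v pos by (intro mult_right_mono) auto
      moreover have "(exp 1 / (exp 1 - 1)) * ((exp 1 - 1) / exp (1::real)) = 1" using pos by simp
      ultimately show ?thesis by simp
    qed
    moreover have "v * (1 - exp (-1)) < v * acc p" using a1 v1 by simp
    ultimately show False using le1 by simp
  qed
qed

theorem proposition2:
  fixes r v p q :: real
  assumes "r > 0"
    and "v \<ge> exp 1 / (exp 1 - 1)"
    and "symNE r v p q"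
  shows "welfare r v p q \<ge> exp 1 / (2 * (exp 1 - 1)) * welfare_simple r v"
proof -
  have p: "p = 1" using p_is_1 assms by blast
  have r: "r > 0" using assms by simp
  have e1: "exp (1::real) > 1" by simp
  have pos: "exp 1 - 1 > (0::real)" using e1 by simp
  have ee: "exp (-1::real) = 1 / exp 1" by (simp add: exp_minus field_simps)
  have v1: "v > 1"
  proof -
    have "exp 1 / (exp 1 - 1) > (1::real)" using e1 by (simp add: less_divide_eq)
    with assms(2) show ?thesis by linarith
  qed
  have rhs: "exp 1 / (2 * (exp 1 - 1)) * welfare_simple r v = v + r"
    using welfare_simple_formula[OF r, of v] pos ee by (simp add: field_simps)
  have q0: "0 \<le> q" and q1: "q \<le> 1" using assms(3) by (auto simp: symNE_def)
  have W: "welfare r v p q = 2 * v * (1 - exp (-1)) + (1 + v) * exp (-1) * (1 - exp (- (q * r)))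
      + 2 * r * (1 - exp (- (1 - q)))" using p by (simp add: welfare_def)
  have ge2: "2 * (1 - exp (-1::real)) \<ge> 1"
  proof -
    have "exp (1::real) \<ge> 2" using exp_ge_add_one_self[of 1] by simp
    then have "1 / exp (1::real) \<le> 1/2" by (simp add: divide_le_eq)
    then show ?thesis using ee by simp
  qed
  have vpart: "2 * v * (1 - exp (-1)) \<ge> v" proof -
    have "v * 1 \<le> v * (2 * (1 - exp (-1)))" using ge2 v1 by (intro mult_left_mono) auto
    then show ?thesis by (simp add: mult.assoc mult.left_commute)
  qed
  show ?thesis
  proof (cases "q = 0")
    case True
    have "r * 1 \<le> r * (2 * (1 - exp (-1)))" using ge2 r by (intro mult_left_mono) auto
    then have "2 * r * (1 - exp (- (1 - q))) \<ge> r" using True by (simp add: algebra_simps)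
    moreover have "(1 + v) * exp (-1) * (1 - exp (- (q * r))) = 0" using True by simp
    ultimately show ?thesis using W vpart rhs True by simp
  next
    case False
    with q0 have qp: "q > 0" by simp
    define x where "x = q * r"
    define y where "y = 1 - q"
    define a where "a = acc y"
    have xp: "x > 0" using qp r by (simp add: x_def)
    have y0: "0 \<le> y" and y1: "y < 1" using q1 qp by (auto simp: y_def)
    have eq: "v * (exp (-1) * acc x) \<ge> a"
      using assms(3) qp p by (simp add: symNE_def acc_LH_def acc_LL_def x_def y_def a_def)
    have accx: "acc x = (1 - exp (-x)) / x" using xp by (simp add: acc_def)
    have A: "(1 + v) * exp (-1) * (1 - exp (-x)) \<ge> (1 + v) / v * x * a"
    proof -
      have "exp (-1) * (1 - exp (-x)) = x * (exp (-1) * acc x)" using accx xp by simp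
      moreover have "x * a / v \<le> x * (exp (-1) * acc x)"
        using eq v1 xp by (simp add: divide_le_eq mult.commute mult_left_mono)
      ultimately have "x * a / v \<le> exp (-1) * (1 - exp (-x))" by (simp add: mult.left_commute)
      then have "(1+v) * (x * a / v) \<le> (1+v) * (exp (-1) * (1 - exp (-x)))"
        using v1 by (intro mult_left_mono) auto
      then show ?thesis by (simp add: field_simps)
    qed
    have B: "2 * r * (1 - exp (-y)) = 2 * r * y * a"
      by (cases "y = 0") (auto simp: a_def acc_def)
    have ay: "a * (1 + y) \<ge> 1"
    proof (cases "y = 0")
      case True then show ?thesis by (simp add: a_def acc_def)
    next
      case False
      with y0 have yp: "y > 0" by simp
      have "1 + y \<le> exp y" by simp
      then have "exp (-y) * (1 + y) \<le> exp (-y) * exp y" by simp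
      then have h: "exp (-y) * (1 + y) \<le> 1" by (simp flip: exp_add)
      have "a * (1 + y) = (1 - exp (-y)) * (1 + y) / y" using False by (simp add: a_def acc_def)
      moreover have "(1 - exp (-y)) * (1 + y) \<ge> y" using h by (simp add: algebra_simps)
      ultimately show ?thesis using yp by simp
    qed
    have a0: "a \<ge> 0" using y0 by (simp add: a_def acc_def divide_nonneg_nonneg)
    have "(1 + v) / v * x * a + 2 * r * y * a = a * r * (q + 2 * y + q / v)"
      using v1 by (simp add: x_def field_simps)
    also have "a * r * (q + 2 * y + q / v) \<ge> a * r * (1 + y)"
    proof -
      have "q + 2*y + q/v \<ge> 1 + y" using qp v1 by (simp add: y_def)
      then show ?thesis using a0 r by (intro mult_left_mono) auto
    qed
    moreover have "a * r * (1 + y) \<ge> r" using ay r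
      by (metis mult.assoc mult.commute mult_le_cancel_left1 less_le_not_le)
    ultimately have "(1 + v) / v * x * a + 2 * r * y * a \<ge> r" by simp
    then have "(1 + v) * exp (-1) * (1 - exp (-x)) + 2 * r * (1 - exp (-y)) \<ge> r"
      using A B by linarith
    then show ?thesis using W vpart rhs by (simp add: x_def y_def)
  qed
qed

end
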